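(* Let $\mathfrak{R}$ be an alternative ring with a nontrivial idempotent $e_1$ and Peirce decomposition $\mathfrak{R}=\mathfrak{R}_{11}\oplus\mathfrak{R}_{12}\oplus\mathfrak{R}_{21}\oplus\mathfrak{R}_{22}$, satisfying: (i) if $a_{11}\in\mathfrak{R}_{11}$, $a_{22}\in\mathfrak{R}_{22}$ and $[a_{11}+a_{22},\mathfrak{R}_{12}]=0$, then $a_{11}+a_{22}\in\mathcal{Z}(\mathfrak{R})$; (ii) if $a_{11}\in\mathfrak{R}_{11}$, $a_{22}\in\mathfrak{R}_{22}$ and $[a_{11}+a_{22},\mathfrak{R}_{21}]=0$, then $a_{11}+a_{22}\in\mathcal{Z}(\mathfrak{R})$. Let $\mathcal{D}$ be a multiplicative Lie-type derivation of $\mathfrak{R}$. Then for $i\in\{1,2\}$ and any $a_{ii},b_{ii}\in\mathfrak{R}_{ii}$ there exists $z_{a_{ii},b_{ii}}\in\mathcal{Z}(\mathfrak{R})$ such that $\mathcal{D}(a_{ii}+b_{ii})=\mathcal{D}(a_{ii})+\mathcal{D}(b_{ii})+z_{a_{ii},b_{ii}}$.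
   Context: Rings are not assumed associative or unital. The associator is $(x,y,z)=(xy)z-x(yz)$; $\mathfrak{R}$ is alternative if $(x,x,y)=0=(y,x,x)$ for all $x,y$. $[x,y]=xy-yx$ and $\mathcal{Z}(\mathfrak{R})=\{r: [r,x]=0\ \forall x\in\mathfrak{R}\}$. Define $p_1(x)=x$, $p_n(x_1,\dots,x_n)=[p_{n-1}(x_1,\dots,x_{n-1}),x_n]$. For $n\ge2$, a (not necessarily additive) map $\mathcal{D}\colon\mathfrak{R}\to\mathfrak{R}$ is a multiplicative Lie $n$-derivation if $\mathcal{D}(p_n(x_1,\dots,x_n))=\sum_{i=1}^n p_n(x_1,\dots,\mathcal{D}(x_i),\dots,x_n)$ for all $x_i\in\mathfrak{R}$; a multiplicative Lie-type derivation is a multiplicative Lie $n$-derivation for some $n\ge2$. A nontrivial idempotent is $e_1\ne0$ with $e_1^2=e_1$ which is not a multiplicative identity. With $e_2a:=a-e_1a$, $ae_2:=a-ae_1$, set $\mathfrak{R}_{ij}=e_i\mathfrak{R}e_j$ ($i,j=1,2$), so $\mathfrak{R}=\bigoplus_{i,j}\mathfrak{R}_{ij}$. *)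

theory Defs
  imports Main
begin

text \<open>A (not necessarily associative, not necessarily unital) ring is modelled as an
abelian group 'a together with an explicit multiplication m, assumed biadditive.\<close>

definition ring_mult :: "('a::ab_group_add \<Rightarrow> 'a \<Rightarrow> 'a) \<Rightarrow> bool" where
  "ring_mult m \<longleftrightarrow> (\<forall>x y z. m (x + y) z = m x z + m y z) \<and> (\<forall>x y z. m x (y + z) = m x y + m x z)"

definition associator :: "('a::ab_group_add \<Rightarrow> 'a \<Rightarrow> 'a) \<Rightarrow> 'a \<Rightarrow> 'a \<Rightarrow> 'a \<Rightarrow> 'a" where
  "associator m x y z = m (m x y) z - m x (m y z)"

definition alternative_ring :: "('a::ab_group_add \<Rightarrow> 'a \<Rightarrow> 'a) \<Rightarrow> bool" where
  "alternative_ring m \<longleftrightarrow> ring_mult m \<and>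
     (\<forall>x y. associator m x x y = 0) \<and> (\<forall>x y. associator m y x x = 0)"

definition commutator :: "('a::ab_group_add \<Rightarrow> 'a \<Rightarrow> 'a) \<Rightarrow> 'a \<Rightarrow> 'a \<Rightarrow> 'a" where
  "commutator m x y = m x y - m y x"

definition center :: "('a::ab_group_add \<Rightarrow> 'a \<Rightarrow> 'a) \<Rightarrow> 'a set" where
  "center m = {r. \<forall>x. commutator m r x = 0}"

text \<open>p_n(x_1,...,x_n) for the list [x_1,...,x_n]: p_1(x)=x, p_n = [p_{n-1}, x_n].\<close>
fun lie_poly :: "('a::ab_group_add \<Rightarrow> 'a \<Rightarrow> 'a) \<Rightarrow> 'a list \<Rightarrow> 'a" where
  "lie_poly m [] = 0"
| "lie_poly m (x # xs) = foldl (commutator m) x xs"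

definition lie_n_derivation :: "('a::ab_group_add \<Rightarrow> 'a \<Rightarrow> 'a) \<Rightarrow> nat \<Rightarrow> ('a \<Rightarrow> 'a) \<Rightarrow> bool" where
  "lie_n_derivation m n D \<longleftrightarrow>
     (\<forall>xs. length xs = n \<longrightarrow>
        D (lie_poly m xs) = (\<Sum>i<n. lie_poly m (xs[i := D (xs ! i)])))"

definition lie_type_derivation :: "('a::ab_group_add \<Rightarrow> 'a \<Rightarrow> 'a) \<Rightarrow> ('a \<Rightarrow> 'a) \<Rightarrow> bool" where
  "lie_type_derivation m D \<longleftrightarrow> (\<exists>n\<ge>2. lie_n_derivation m n D)"

definition nontrivial_idempotent :: "('a::ab_group_add \<Rightarrow> 'a \<Rightarrow> 'a) \<Rightarrow> 'a \<Rightarrow> bool" where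
  "nontrivial_idempotent m e \<longleftrightarrow> e \<noteq> 0 \<and> m e e = e \<and> \<not> (\<forall>x. m e x = x \<and> m x e = x)"

text \<open>e_i a and a e_j, with e_2 a := a - e_1 a, a e_2 := a - a e_1.\<close>
definition lmul_e :: "('a::ab_group_add \<Rightarrow> 'a \<Rightarrow> 'a) \<Rightarrow> 'a \<Rightarrow> nat \<Rightarrow> 'a \<Rightarrow> 'a" where
  "lmul_e m e i a = (if i = 1 then m e a else a - m e a)"

definition rmul_e :: "('a::ab_group_add \<Rightarrow> 'a \<Rightarrow> 'a) \<Rightarrow> 'a \<Rightarrow> nat \<Rightarrow> 'a \<Rightarrow> 'a" where
  "rmul_e m e j a = (if j = 1 then m a e else a - m a e)"

definition peirce :: "('a::ab_group_add \<Rightarrow> 'a \<Rightarrow> 'a) \<Rightarrow> 'a \<Rightarrow> nat \<Rightarrow> nat \<Rightarrow> 'a set" where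
  "peirce m e i j = range (\<lambda>a. rmul_e m e j (lmul_e m e i a))"

end

theory Submission
  imports Defs
begin

locale altr =
  fixes m :: "'a::ab_group_add \<Rightarrow> 'a \<Rightarrow> 'a"
  assumes alt: "alternative_ring m"
begin

lemma ladd: "m (x + y) z = m x z + m y z"
  using alt unfolding alternative_ring_def ring_mult_def by blast
lemma radd: "m x (y + z) = m x y + m x z"
  using alt unfolding alternative_ring_def ring_mult_def by blast
lemma lzero[simp]: "m 0 y = 0"
  using ladd[of 0 0 y] by simp
lemma rzero[simp]: "m x 0 = 0"
  using radd[of x 0 0] by simp
lemma lminus: "m (- x) y = - m x y"
  using ladd[of "- x" x y] by (simp add: eq_neg_iff_add_eq_0)
lemma rminus: "m x (- y) = - m x y"
  using radd[of x "- y" y] by (simp add: eq_neg_iff_add_eq_0)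
lemma ldiff: "m (x - y) z = m x z - m y z"
  using ladd[of x "- y" z] lminus by simp
lemma rdiff: "m x (y - z) = m x y - m x z"
  using radd[of x y "- z"] rminus by simp

lemmas bil = ladd radd lminus rminus ldiff rdiff

lemma la: "m (m x x) y - m x (m x y) = 0"
  using alt unfolding alternative_ring_def associator_def by blast
lemma ra: "m (m y x) x - m y (m x x) = 0"
  using alt unfolding alternative_ring_def associator_def by blast

lemma lin1: "(m (m u v) w - m u (m v w)) + (m (m v u) w - m v (m u w)) = 0"
proof -
  have "m (m (u+v) (u+v)) w - m (u+v) (m (u+v) w) = 0" by (rule la)
  then show ?thesis using la[of u w] la[of v w] by (simp add: bil algebra_simps)
qed
lemma lin2: "(m (m u v) w - m u (m v w)) + (m (m u w) v - m u (m w v)) = 0"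
proof -
  have "m (m u (v+w)) (v+w) - m u (m (v+w) (v+w)) = 0" by (rule ra)
  then show ?thesis using ra[of u v] ra[of u w] by (simp add: bil algebra_simps)
qed

lemma Llin1: "(m t (m (m u v) w) - m t (m u (m v w))) + (m t (m (m v u) w) - m t (m v (m u w))) = 0"
  using arg_cong[OF lin1[of u v w], of "m t"] by (simp add: bil)
lemma Llin2: "(m t (m (m u v) w) - m t (m u (m v w))) + (m t (m (m u w) v) - m t (m u (m w v))) = 0"
  using arg_cong[OF lin2[of u v w], of "m t"] by (simp add: bil)
lemma Lla: "(m t (m (m u u) w) - m t (m u (m u w))) = 0"
  using arg_cong[OF la[of u w], of "m t"] by (simp add: bil)
lemma Lra: "(m t (m (m u v) v) - m t (m u (m v v))) = 0"
  using arg_cong[OF ra[of u v], of "m t"] by (simp add: bil)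
lemma Rlin1: "(m (m (m u v) w) t - m (m u (m v w)) t) + (m (m (m v u) w) t - m (m v (m u w)) t) = 0"
  using arg_cong[OF lin1[of u v w], of "\<lambda>q. m q t"] by (simp add: bil)
lemma Rlin2: "(m (m (m u v) w) t - m (m u (m v w)) t) + (m (m (m u w) v) t - m (m u (m w v)) t) = 0"
  using arg_cong[OF lin2[of u v w], of "\<lambda>q. m q t"] by (simp add: bil)
lemma Rla: "(m (m (m u u) w) t - m (m u (m u w)) t) = 0"
  using arg_cong[OF la[of u w], of "\<lambda>q. m q t"] by (simp add: bil)
lemma Rra: "(m (m (m u v) v) t - m (m u (m v v)) t) = 0"
  using arg_cong[OF ra[of u v], of "\<lambda>q. m q t"] by (simp add: bil)

lemma right_moufang: "m (m (m (z) (x)) (y)) (x) = m (z) (m (x) (m (y) (x)))"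
proof -
  have h0: "(m x (m (m (y) (x)) (z)) - m x (m (y) (m (x) (z)))) + (m x (m (m (y) (z)) (x)) - m x (m (y) (m (z) (x)))) = 0" by (rule Llin2)
  have h1: "(m (m (x) (x)) (m (y) (z)) - m (x) (m (x) (m (y) (z)))) + (m (m (x) (m (y) (z))) (x) - m (x) (m (m (y) (z)) (x))) = 0" by (rule lin2)
  have h2: "(m x (m (m (y) (x)) (z)) - m x (m (y) (m (x) (z)))) + (m x (m (m (x) (y)) (z)) - m x (m (x) (m (y) (z)))) = 0" by (rule Llin1)
  have h3: "(m (m (m (x) (y)) (x)) z - m (m (x) (m (y) (x))) z) + (m (m (m (x) (x)) (y)) z - m (m (x) (m (x) (y))) z) = 0" by (rule Rlin2)
  have h4: "(m (m (m (y) (x)) (x)) z - m (m (y) (m (x) (x))) z) + (m (m (m (x) (y)) (x)) z - m (m (x) (m (y) (x))) z) = 0" by (rule Rlin1)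
  have h5: "(m (m (m (y) (x)) (z)) x - m (m (y) (m (x) (z))) x) + (m (m (m (x) (y)) (z)) x - m (m (x) (m (y) (z))) x) = 0" by (rule Rlin1)
  have h6: "(m (m (m (y) (x)) (x)) z - m (m (y) (m (x) (x))) z) = 0" by (rule Rra)
  have h7: "(m (m (m (y) (x)) (z)) x - m (m (y) (m (x) (z))) x) + (m (m (m (y) (z)) (x)) x - m (m (y) (m (z) (x))) x) = 0" by (rule Rlin2)
  have h8: "(m (m (m (y) (z)) (x)) x - m (m (y) (m (z) (x))) x) + (m (m (m (z) (y)) (x)) x - m (m (z) (m (y) (x))) x) = 0" by (rule Rlin1)
  have h9: "(m (m (x) (m (x) (y))) (z) - m (x) (m (m (x) (y)) (z))) + (m (m (m (x) (y)) (x)) (z) - m (m (x) (y)) (m (x) (z))) = 0" by (rule lin1)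
  have h10: "(m (m (y) (z)) (m (x) (x)) - m (y) (m (z) (m (x) (x)))) + (m (m (z) (y)) (m (x) (x)) - m (z) (m (y) (m (x) (x)))) = 0" by (rule lin1)
  have h11: "(m (m (y) (m (x) (x))) (z) - m (y) (m (m (x) (x)) (z))) + (m (m (y) (z)) (m (x) (x)) - m (y) (m (z) (m (x) (x)))) = 0" by (rule lin2)
  have h12: "(m (m (y) (m (x) (x))) (z) - m (y) (m (m (x) (x)) (z))) + (m (m (m (x) (x)) (y)) (z) - m (m (x) (x)) (m (y) (z))) = 0" by (rule lin1)
  have h13: "(m (m (m (y) (x)) (z)) (x) - m (m (y) (x)) (m (z) (x))) + (m (m (z) (m (y) (x))) (x) - m (z) (m (m (y) (x)) (x))) = 0" by (rule lin1)
  have h14: "(m (m (m (x) (y)) (x)) (z) - m (m (x) (y)) (m (x) (z))) + (m (m (m (x) (y)) (z)) (x) - m (m (x) (y)) (m (z) (x))) = 0" by (rule lin2)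
  have h15: "(m z (m (m (y) (x)) (x)) - m z (m (y) (m (x) (x)))) = 0" by (rule Lra)
  have h16: "(m (m (x) (z)) (m (y) (x)) - m (x) (m (z) (m (y) (x)))) + (m (m (z) (x)) (m (y) (x)) - m (z) (m (x) (m (y) (x)))) = 0" by (rule lin1)
  have h17: "(m (m (x) (m (y) (x))) (z) - m (x) (m (m (y) (x)) (z))) + (m (m (x) (z)) (m (y) (x)) - m (x) (m (z) (m (y) (x)))) = 0" by (rule lin2)
  have h18: "(m (m (x) (m (y) (x))) (z) - m (x) (m (m (y) (x)) (z))) + (m (m (m (y) (x)) (x)) (z) - m (m (y) (x)) (m (x) (z))) = 0" by (rule lin1)
  have h19: "(m (m (m (y) (x)) (x)) (z) - m (m (y) (x)) (m (x) (z))) + (m (m (m (y) (x)) (z)) (x) - m (m (y) (x)) (m (z) (x))) = 0" by (rule lin2)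
  have h20: "(m (m (y) (x)) (m (z) (x)) - m (y) (m (x) (m (z) (x)))) + (m (m (x) (y)) (m (z) (x)) - m (x) (m (y) (m (z) (x)))) = 0" by (rule lin1)
  have h21: "(m (m (y) (x)) (m (z) (x)) - m (y) (m (x) (m (z) (x)))) + (m (m (y) (m (z) (x))) (x) - m (y) (m (m (z) (x)) (x))) = 0" by (rule lin2)
  have h22: "(m (m (y) (m (z) (x))) (x) - m (y) (m (m (z) (x)) (x))) + (m (m (m (z) (x)) (y)) (x) - m (m (z) (x)) (m (y) (x))) = 0" by (rule lin1)
  have h23: "(m (m (x) (m (z) (y))) (x) - m (x) (m (m (z) (y)) (x))) + (m (m (m (z) (y)) (x)) (x) - m (m (z) (y)) (m (x) (x))) = 0" by (rule lin1)
  have h24: "(m (m (x) (x)) (m (z) (y)) - m (x) (m (x) (m (z) (y)))) = 0" by (rule la)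
  have h25: "(m (m (x) (x)) (m (z) (y)) - m (x) (m (x) (m (z) (y)))) + (m (m (x) (m (z) (y))) (x) - m (x) (m (m (z) (y)) (x))) = 0" by (rule lin2)
  have h26: "(m y (m (m (x) (x)) (z)) - m y (m (x) (m (x) (z)))) + (m y (m (m (x) (x)) (z)) - m y (m (x) (m (x) (z)))) = 0" by (rule Llin1)
  have h27: "(m (m (x) (x)) (m (y) (z)) - m (x) (m (x) (m (y) (z)))) = 0" by (rule la)
  have h28: "(m (m (m (x) (y)) (z)) x - m (m (x) (m (y) (z))) x) + (m (m (m (x) (z)) (y)) x - m (m (x) (m (z) (y))) x) = 0" by (rule Rlin2)
  have h29: "(m x (m (m (y) (z)) (x)) - m x (m (y) (m (z) (x)))) + (m x (m (m (z) (y)) (x)) - m x (m (z) (m (y) (x)))) = 0" by (rule Llin1)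
  have h30: "(m (m (y) (x)) (m (x) (z)) - m (y) (m (x) (m (x) (z)))) + (m (m (y) (m (x) (z))) (x) - m (y) (m (m (x) (z)) (x))) = 0" by (rule lin2)
  have h31: "(m (m (y) (m (x) (z))) (x) - m (y) (m (m (x) (z)) (x))) + (m (m (m (x) (z)) (y)) (x) - m (m (x) (z)) (m (y) (x))) = 0" by (rule lin1)
  have "m (m (m (z) (x)) (y)) (x) - m (z) (m (x) (m (y) (x))) = ((m x (m (m (y) (x)) (z)) - m x (m (y) (m (x) (z)))) + (m x (m (m (y) (z)) (x)) - m x (m (y) (m (z) (x))))) + (- ((m (m (x) (x)) (m (y) (z)) - m (x) (m (x) (m (y) (z)))) + (m (m (x) (m (y) (z))) (x) - m (x) (m (m (y) (z)) (x))))) + (- ((m x (m (m (y) (x)) (z)) - m x (m (y) (m (x) (z)))) + (m x (m (m (x) (y)) (z)) - m x (m (x) (m (y) (z)))))) + (- ((m (m (m (x) (y)) (x)) z - m (m (x) (m (y) (x))) z) + (m (m (m (x) (x)) (y)) z - m (m (x) (m (x) (y))) z))) + ((m (m (m (y) (x)) (x)) z - m (m (y) (m (x) (x))) z) + (m (m (m (x) (y)) (x)) z - m (m (x) (m (y) (x))) z)) + ((m (m (m (y) (x)) (z)) x - m (m (y) (m (x) (z))) x) + (m (m (m (x) (y)) (z)) x - m (m (x) (m (y) (z))) x)) + ((m (m (m (y) (x)) (x)) z - m (m (y) (m (x) (x))) z)) + (- ((m (m (m (y) (x)) (z)) x - m (m (y) (m (x) (z))) x) + (m (m (m (y) (z))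 (x)) x - m (m (y) (m (z) (x))) x))) + ((m (m (m (y) (z)) (x)) x - m (m (y) (m (z) (x))) x) + (m (m (m (z) (y)) (x)) x - m (m (z) (m (y) (x))) x)) + (- ((m (m (x) (m (x) (y))) (z) - m (x) (m (m (x) (y)) (z))) + (m (m (m (x) (y)) (x)) (z) - m (m (x) (y)) (m (x) (z))))) + (- ((m (m (y) (z)) (m (x) (x)) - m (y) (m (z) (m (x) (x)))) + (m (m (z) (y)) (m (x) (x)) - m (z) (m (y) (m (x) (x)))))) + ((m (m (y) (m (x) (x))) (z) - m (y) (m (m (x) (x)) (z))) + (m (m (y) (z)) (m (x) (x)) - m (y) (m (z) (m (x) (x))))) + ((m (m (y) (m (x) (x))) (z) - m (y) (m (m (x) (x)) (z))) + (m (m (m (x) (x)) (y)) (z) - m (m (x) (x)) (m (y) (z)))) + ((m (m (m (y) (x)) (z)) (x) - m (m (y) (x)) (m (z) (x))) + (m (m (z) (m (y) (x))) (x) - m (z) (m (m (y) (x)) (x)))) + ((m (m (m (x) (y)) (x)) (z) - m (m (x) (y)) (m (x) (z))) + (m (m (m (x) (y)) (z)) (x) - m (m (x) (y)) (m (z) (x)))) + ((m z (m (m (y) (x)) (x)) - m z (m (y) (m (x) (x))))) + ((m (m (x) (z)) (m (y) (x)) - m (x) (m (z) (m (y) (x)))) + (m (m (z) (x)) (m (y) (x)) - m (z) (m (x) (m (y) (x))))) + ((m (m (x) (m (y) (x))) (z) - m (x) (m (m (y) (x)) (z))) + (m (m (x) (z)) (m (y) (x)) - m (x) (m (z) (m (y)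 (x))))) + (- ((m (m (x) (m (y) (x))) (z) - m (x) (m (m (y) (x)) (z))) + (m (m (m (y) (x)) (x)) (z) - m (m (y) (x)) (m (x) (z))))) + (- ((m (m (m (y) (x)) (x)) (z) - m (m (y) (x)) (m (x) (z))) + (m (m (m (y) (x)) (z)) (x) - m (m (y) (x)) (m (z) (x))))) + ((m (m (y) (x)) (m (z) (x)) - m (y) (m (x) (m (z) (x)))) + (m (m (x) (y)) (m (z) (x)) - m (x) (m (y) (m (z) (x))))) + (- ((m (m (y) (x)) (m (z) (x)) - m (y) (m (x) (m (z) (x)))) + (m (m (y) (m (z) (x))) (x) - m (y) (m (m (z) (x)) (x))))) + ((m (m (y) (m (z) (x))) (x) - m (y) (m (m (z) (x)) (x))) + (m (m (m (z) (x)) (y)) (x) - m (m (z) (x)) (m (y) (x)))) + (- ((m (m (x) (m (z) (y))) (x) - m (x) (m (m (z) (y)) (x))) + (m (m (m (z) (y)) (x)) (x) - m (m (z) (y)) (m (x) (x))))) + ((m (m (x) (x)) (m (z) (y)) - m (x) (m (x) (m (z) (y))))) + (- ((m (m (x) (x)) (m (z) (y)) - m (x) (m (x) (m (z) (y)))) + (m (m (x) (m (z) (y))) (x) - m (x) (m (m (z) (y)) (x))))) + ((m y (m (m (x) (x)) (z)) - m y (m (x) (m (x) (z)))) + (m y (m (m (x) (x)) (z)) - m y (m (x) (m (x) (z))))) + ((m (m (x) (x)) (m (y) (z)) - m (x) (m (x) (m (y) (z))))) + ((m (m (x) (x)) (m (y) (z)) - m (x) (m (x) (m (y) (z))))) +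 (- ((m (m (m (x) (y)) (z)) x - m (m (x) (m (y) (z))) x) + (m (m (m (x) (z)) (y)) x - m (m (x) (m (z) (y))) x))) + (- ((m (m (m (x) (y)) (z)) x - m (m (x) (m (y) (z))) x) + (m (m (m (x) (z)) (y)) x - m (m (x) (m (z) (y))) x))) + (- ((m x (m (m (y) (z)) (x)) - m x (m (y) (m (z) (x)))) + (m x (m (m (z) (y)) (x)) - m x (m (z) (m (y) (x)))))) + (- ((m x (m (m (y) (z)) (x)) - m x (m (y) (m (z) (x)))) + (m x (m (m (z) (y)) (x)) - m x (m (z) (m (y) (x)))))) + (- ((m (m (y) (x)) (m (x) (z)) - m (y) (m (x) (m (x) (z)))) + (m (m (y) (m (x) (z))) (x) - m (y) (m (m (x) (z)) (x))))) + (- ((m (m (y) (x)) (m (x) (z)) - m (y) (m (x) (m (x) (z)))) + (m (m (y) (m (x) (z))) (x) - m (y) (m (m (x) (z)) (x))))) + ((m (m (y) (m (x) (z))) (x) - m (y) (m (m (x) (z)) (x))) + (m (m (m (x) (z)) (y)) (x) - m (m (x) (z)) (m (y) (x)))) + ((m (m (y) (m (x) (z))) (x) - m (y) (m (m (x) (z)) (x))) + (m (m (m (x) (z)) (y)) (x) - m (m (x) (z)) (m (y) (x))))" by (simp add: algebra_simps)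
  also have "... = 0" unfolding h1 unfolding h9 unfolding h10 unfolding h11 unfolding h12 unfolding h13 unfolding h14 unfolding h16 unfolding h17 unfolding h18 unfolding h19 unfolding h20 unfolding h21 unfolding h22 unfolding h23 unfolding h25 unfolding h30 unfolding h31 unfolding h0 unfolding h2 unfolding h3 unfolding h4 unfolding h5 unfolding h7 unfolding h8 unfolding h26 unfolding h28 unfolding h29 unfolding h24 unfolding h27 unfolding h6 unfolding h15 by simp
  finally show ?thesis by simp
qed
lemma left_moufang: "m (x) (m (y) (m (x) (z))) = m (m (m (x) (y)) (x)) (z)"
proof -
  have h0: "(m (m (x) (x)) (m (y) (z)) - m (x) (m (x) (m (y) (z)))) = 0" by (rule la)
  have h1: "(m (m (y) (z)) (m (x) (x)) - m (y) (m (z) (m (x) (x)))) + (m (m (z) (y)) (m (x) (x)) - m (z) (m (y) (m (x) (x)))) = 0" by (rule lin1)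
  have h2: "(m (m (y) (m (x) (x))) (z) - m (y) (m (m (x) (x)) (z))) + (m (m (y) (z)) (m (x) (x)) - m (y) (m (z) (m (x) (x)))) = 0" by (rule lin2)
  have h3: "(m (m (m (y) (x)) (z)) (x) - m (m (y) (x)) (m (z) (x))) + (m (m (z) (m (y) (x))) (x) - m (z) (m (m (y) (x)) (x))) = 0" by (rule lin1)
  have h4: "(m x (m (m (y) (x)) (z)) - m x (m (y) (m (x) (z)))) + (m x (m (m (y) (z)) (x)) - m x (m (y) (m (z) (x)))) = 0" by (rule Llin2)
  have h5: "(m (m (m (y) (x)) (x)) z - m (m (y) (m (x) (x))) z) + (m (m (m (x) (y)) (x)) z - m (m (x) (m (y) (x))) z) = 0" by (rule Rlin1)
  have h6: "(m (m (m (y) (x)) (z)) x - m (m (y) (m (x) (z))) x) + (m (m (m (x) (y)) (z)) x - m (m (x) (m (y) (z))) x) = 0" by (rule Rlin1)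
  have h7: "(m (m (m (y) (x)) (x)) (z) - m (m (y) (x)) (m (x) (z))) + (m (m (m (y) (x)) (z)) (x) - m (m (y) (x)) (m (z) (x))) = 0" by (rule lin2)
  have h8: "(m (m (m (y) (x)) (x)) z - m (m (y) (m (x) (x))) z) = 0" by (rule Rra)
  have h9: "(m (m (m (y) (x)) (z)) x - m (m (y) (m (x) (z))) x) + (m (m (m (y) (z)) (x)) x - m (m (y) (m (z) (x))) x) = 0" by (rule Rlin2)
  have h10: "(m (m (m (y) (z)) (x)) x - m (m (y) (m (z) (x))) x) + (m (m (m (z) (y)) (x)) x - m (m (z) (m (y) (x))) x) = 0" by (rule Rlin1)
  have h11: "(m (m (x) (m (z) (y))) (x) - m (x) (m (m (z) (y)) (x))) + (m (m (m (z) (y)) (x)) (x) - m (m (z) (y)) (m (x) (x))) = 0" by (rule lin1)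
  have h12: "(m z (m (m (y) (x)) (x)) - m z (m (y) (m (x) (x)))) = 0" by (rule Lra)
  have h13: "(m (m (x) (m (y) (x))) (z) - m (x) (m (m (y) (x)) (z))) + (m (m (x) (z)) (m (y) (x)) - m (x) (m (z) (m (y) (x)))) = 0" by (rule lin2)
  have h14: "(m y (m (m (x) (x)) (z)) - m y (m (x) (m (x) (z)))) + (m y (m (m (x) (x)) (z)) - m y (m (x) (m (x) (z)))) = 0" by (rule Llin1)
  have h15: "(m (m (y) (x)) (m (x) (z)) - m (y) (m (x) (m (x) (z)))) + (m (m (x) (y)) (m (x) (z)) - m (x) (m (y) (m (x) (z)))) = 0" by (rule lin1)
  have h16: "(m (m (m (x) (y)) (z)) x - m (m (x) (m (y) (z))) x) + (m (m (m (x) (z)) (y)) x - m (m (x) (m (z) (y))) x) = 0" by (rule Rlin2)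
  have h17: "(m x (m (m (y) (z)) (x)) - m x (m (y) (m (z) (x)))) + (m x (m (m (z) (y)) (x)) - m x (m (z) (m (y) (x)))) = 0" by (rule Llin1)
  have h18: "(m (m (x) (m (y) (x))) (z) - m (x) (m (m (y) (x)) (z))) + (m (m (m (y) (x)) (x)) (z) - m (m (y) (x)) (m (x) (z))) = 0" by (rule lin1)
  have h19: "(m x (m (m (y) (x)) (z)) - m x (m (y) (m (x) (z)))) + (m x (m (m (x) (y)) (z)) - m x (m (x) (m (y) (z)))) = 0" by (rule Llin1)
  have h20: "(m (m (x) (m (x) (y))) (z) - m (x) (m (m (x) (y)) (z))) + (m (m (m (x) (y)) (x)) (z) - m (m (x) (y)) (m (x) (z))) = 0" by (rule lin1)
  have h21: "(m (m (y) (x)) (m (x) (z)) - m (y) (m (x) (m (x) (z)))) + (m (m (y) (m (x) (z))) (x) - m (y) (m (m (x) (z)) (x))) = 0" by (rule lin2)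
  have h22: "(m (m (y) (m (x) (z))) (x) - m (y) (m (m (x) (z)) (x))) + (m (m (m (x) (z)) (y)) (x) - m (m (x) (z)) (m (y) (x))) = 0" by (rule lin1)
  have h23: "(m (m (y) (m (x) (x))) (z) - m (y) (m (m (x) (x)) (z))) + (m (m (m (x) (x)) (y)) (z) - m (m (x) (x)) (m (y) (z))) = 0" by (rule lin1)
  have h24: "(m (m (m (x) (y)) (x)) z - m (m (x) (m (y) (x))) z) + (m (m (m (x) (x)) (y)) z - m (m (x) (m (x) (y))) z) = 0" by (rule Rlin2)
  have "m (x) (m (y) (m (x) (z))) - m (m (m (x) (y)) (x)) (z) = ((m (m (x) (x)) (m (y) (z)) - m (x) (m (x) (m (y) (z))))) + (- ((m (m (y) (z)) (m (x) (x)) - m (y) (m (z) (m (x) (x)))) + (m (m (z) (y)) (m (x) (x)) - m (z) (m (y) (m (x) (x)))))) + ((m (m (y) (m (x) (x))) (z) - m (y) (m (m (x) (x)) (z))) + (m (m (y) (z)) (m (x) (x)) - m (y) (m (z) (m (x) (x))))) + ((m (m (m (y) (x)) (z)) (x) - m (m (y) (x)) (m (z) (x))) + (m (m (z) (m (y) (x))) (x) - m (z) (m (m (y) (x)) (x)))) + ((m x (m (m (y) (x)) (z)) - m x (m (y) (m (x) (z)))) + (m x (m (m (y) (z)) (x)) - m x (m (y) (m (z) (x))))) + ((m (m (m (y) (x)) (x)) z - m (m (y) (m (x) (x))) z) + (m (m (m (x) (y)) (x)) z - m (m (x) (m (y) (x))) z)) + ((m (m (m (y) (x)) (z)) x - m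 (m (y) (m (x) (z))) x) + (m (m (m (x) (y)) (z)) x - m (m (x) (m (y) (z))) x)) + (- ((m (m (m (y) (x)) (x)) (z) - m (m (y) (x)) (m (x) (z))) + (m (m (m (y) (x)) (z)) (x) - m (m (y) (x)) (m (z) (x))))) + ((m (m (m (y) (x)) (x)) z - m (m (y) (m (x) (x))) z)) + (- ((m (m (m (y) (x)) (z)) x - m (m (y) (m (x) (z))) x) + (m (m (m (y) (z)) (x)) x - m (m (y) (m (z) (x))) x))) + ((m (m (m (y) (z)) (x)) x - m (m (y) (m (z) (x))) x) + (m (m (m (z) (y)) (x)) x - m (m (z) (m (y) (x))) x)) + (- ((m (m (x) (m (z) (y))) (x) - m (x) (m (m (z) (y)) (x))) + (m (m (m (z) (y)) (x)) (x) - m (m (z) (y)) (m (x) (x))))) + ((m z (m (m (y) (x)) (x)) - m z (m (y) (m (x) (x))))) + ((m (m (x) (m (y) (x))) (z) - m (x) (m (m (y) (x)) (z))) + (m (m (x) (z)) (m (y) (x)) - m (x) (m (z) (m (y) (x))))) + ((m y (m (m (x) (x)) (z)) - m y (m (x) (m (x) (z)))) + (m y (m (m (x) (x)) (z)) - m y (m (x) (m (x) (z))))) + (- ((m (m (y) (x)) (m (x) (z)) - m (y) (m (x) (m (x) (z)))) + (m (m (x) (y)) (m (x) (z)) - m (x) (m (y) (m (x) (z)))))) + (- ((m (m (m (x) (y)) (z)) x - m (m (x) (m (y) (z))) x) + (m (m (m (x) (z)) (y)) x - m (m (x) (m (z) (y))) x))) + (- ((m x (m (m (y) (z)) (x)) -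 m x (m (y) (m (z) (x)))) + (m x (m (m (z) (y)) (x)) - m x (m (z) (m (y) (x)))))) + (- ((m (m (x) (m (y) (x))) (z) - m (x) (m (m (y) (x)) (z))) + (m (m (m (y) (x)) (x)) (z) - m (m (y) (x)) (m (x) (z))))) + (- ((m x (m (m (y) (x)) (z)) - m x (m (y) (m (x) (z)))) + (m x (m (m (x) (y)) (z)) - m x (m (x) (m (y) (z)))))) + (- ((m (m (x) (m (x) (y))) (z) - m (x) (m (m (x) (y)) (z))) + (m (m (m (x) (y)) (x)) (z) - m (m (x) (y)) (m (x) (z))))) + (- ((m (m (y) (x)) (m (x) (z)) - m (y) (m (x) (m (x) (z)))) + (m (m (y) (m (x) (z))) (x) - m (y) (m (m (x) (z)) (x))))) + ((m (m (y) (m (x) (z))) (x) - m (y) (m (m (x) (z)) (x))) + (m (m (m (x) (z)) (y)) (x) - m (m (x) (z)) (m (y) (x)))) + ((m (m (y) (m (x) (x))) (z) - m (y) (m (m (x) (x)) (z))) + (m (m (m (x) (x)) (y)) (z) - m (m (x) (x)) (m (y) (z)))) + (- ((m (m (m (x) (y)) (x)) z - m (m (x) (m (y) (x))) z) + (m (m (m (x) (x)) (y)) z - m (m (x) (m (x) (y))) z)))" by (simp add: algebra_simps)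
  also have "... = 0" unfolding h1 unfolding h2 unfolding h3 unfolding h7 unfolding h11 unfolding h13 unfolding h15 unfolding h18 unfolding h20 unfolding h21 unfolding h22 unfolding h23 unfolding h4 unfolding h5 unfolding h6 unfolding h9 unfolding h10 unfolding h14 unfolding h16 unfolding h17 unfolding h19 unfolding h24 unfolding h0 unfolding h8 unfolding h12 by simp
  finally show ?thesis by simp
qed

lemma flex: "m (m x y) x = m x (m y x)"
  using lin1[of x y x] ra[of y x] by (simp add: algebra_simps)

end

locale altre = altr +
  fixes e
  assumes ee: "m e e = e"
begin

lemma eea: "m e (m e a) = m e a"
  using la[of e a] ee by simp
lemma aee: "m (m a e) e = m a e"
  using ra[of a e] ee by simp

lemma p11: assumes "y \<in> peirce m e 1 1" shows "m e y = y" "m y e = y"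
proof -
  obtain a where y: "y = m (m e a) e" using assms unfolding peirce_def lmul_e_def rmul_e_def by auto
  show "m e y = y" unfolding y using flex[of e "m e a"] eea[of a] by simp
  show "m y e = y" unfolding y using aee[of "m e a"] by simp
qed

lemma p12: assumes "y \<in> peirce m e 1 2" shows "m e y = y" "m y e = 0"
proof -
  obtain a where y: "y = m e a - m (m e a) e" using assms unfolding peirce_def lmul_e_def rmul_e_def by auto
  show "m e y = y" unfolding y using flex[of e "m e a"] eea[of a] by (simp add: bil)
  show "m y e = 0" unfolding y using aee[of "m e a"] by (simp add: bil)
qed

lemma p21: assumes "y = m a e - m (m e a) e" shows "m e y = 0" "m y e = y"
proof -
  show "m e y = 0" unfolding assms using flex[of e a] flex[of e "m e a"] eea[of a] by (simp add: bil)
  show "m y e = y" unfolding assms using aee[of "m e a"] aee[of a] by (simp add: bil)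
qed

lemma p22: assumes "y \<in> peirce m e 2 2" shows "m e y = 0" "m y e = 0"
proof -
  obtain a where y: "y = (a - m e a) - m (a - m e a) e" using assms unfolding peirce_def lmul_e_def rmul_e_def by auto
  show "m e y = 0" unfolding y using flex[of e a] flex[of e "m e a"] eea[of a] by (simp add: bil)
  show "m y e = 0" unfolding y using aee[of "m e a"] aee[of a] by (simp add: bil)
qed

lemma sq12: assumes "m e x = x" "m x e = 0" shows "m x x = 0"
  using lin1[of x e x] ra[of e x] assms by (simp add: algebra_simps)

lemma b11x: assumes "m e b = b" "m b e = b" "m e x = x" "m x e = 0"
  shows "m e (m b x) = m b x" "m (m b x) e = 0" "m x b = 0"
proof -
  show "m e (m b x) = m b x" using lin1[of e b x] assms by (simp add: algebra_simps)
  show "m (m b x) e = 0" using lin2[of b x e] assms by (simp add: algebra_simps)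
  show "m x b = 0" using right_moufang[of x e b] assms by simp
qed

lemma d22x: assumes "m e d = 0" "m d e = 0" "m e x = x" "m x e = 0"
  shows "m e (m x d) = m x d" "m (m x d) e = 0" "m d x = 0"
proof -
  show "m e (m x d) = m x d" using lin1[of e x d] assms by (simp add: algebra_simps)
  show "m (m x d) e = 0" using lin2[of x d e] assms by (simp add: algebra_simps)
  have "m e (m d x) = 0" using left_moufang[of e d x] assms by simp
  then show "m d x = 0" using lin1[of e d x] assms by (simp add: algebra_simps)
qed

end

context altr
begin

lemma comm_ladd: "commutator m (u + v) y = commutator m u y + commutator m v y"
  unfolding commutator_def by (simp add: bil algebra_simps)
lemma comm_radd: "commutator m y (u + v) = commutator m y u + commutator m y v"
  unfolding commutator_def by (simp add: bil algebra_simps)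
lemma comm_rdiff: "commutator m y (u - v) = commutator m y u - commutator m y v"
  unfolding commutator_def by (simp add: bil algebra_simps)
lemma comm_l0[simp]: "commutator m 0 y = 0"
  unfolding commutator_def by simp
lemma comm_r0[simp]: "commutator m y 0 = 0"
  unfolding commutator_def by simp

lemma lp_cons2: "lie_poly m (u # y # ys) = lie_poly m (commutator m u y # ys)"
  by simp
lemma lp_one[simp]: "lie_poly m [u] = u"
  by simp
declare lie_poly.simps(2)[simp del]

lemma lp_add: "lie_poly m ((u + v) # ys) = lie_poly m (u # ys) + lie_poly m (v # ys)"
proof (induction ys arbitrary: u v)
  case Nil then show ?case by simp
next
  case (Cons y ys)
  show ?case unfolding lp_cons2 comm_ladd by (rule Cons.IH)
qed

lemma lp_zero[simp]: "lie_poly m (0 # ys) = 0"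
proof (induction ys)
  case Nil then show ?case by simp
next
  case (Cons y ys) then show ?case unfolding lp_cons2 comm_l0 .
qed

lemma lp_minus: "lie_poly m ((- u) # ys) = - lie_poly m (u # ys)"
  using lp_add[of u "- u" ys] by (simp add: eq_neg_iff_add_eq_0 add.commute)

lemma lp_diff: "lie_poly m ((u - v) # ys) = lie_poly m (u # ys) - lie_poly m (v # ys)"
  using lp_add[of u "- v" ys] lp_minus[of v ys] by simp

end

context altre
begin

lemma lp_e:
  assumes "m e r = 0" "m r e = r" "m e s = s" "m s e = 0"
  shows "lie_poly m ((r + s) # replicate k e) = r + s \<or> lie_poly m ((r + s) # replicate k e) = r - s"
  using assms(3,4)
proof (induction k arbitrary: s)
  case 0 then show ?case by simp
next
  case (Suc k)
  have c: "commutator m (r + s) e = r + (- s)"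
    unfolding commutator_def using assms(1,2) Suc.prems by (simp add: bil)
  have "m e (- s) = - s" "m (- s) e = 0" using Suc.prems by (simp_all add: bil)
  from Suc.IH[OF this] show ?case unfolding replicate_Suc lp_cons2 c by auto
qed

lemma lp_e0:
  assumes "m e r = 0" "m r e = r" "m e s = s" "m s e = 0"
    and "lie_poly m ((r + s) # replicate k e) = 0"
  shows "r = 0" "s = 0"
proof -
  have "r + s = 0 \<or> r - s = 0" using lp_e[OF assms(1-4), of k] assms(5) by auto
  then have "m e (r + s) = 0 \<or> m e (r - s) = 0" by auto
  then show "s = 0" using assms(1,3) by (auto simp: bil)
  then show "r = 0" using \<open>r + s = 0 \<or> r - s = 0\<close> by auto
qed

end

locale altder = altr +
  fixes D and n :: nat
  assumes der: "lie_n_derivation m n D" and n2: "2 \<le> n"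
begin

definition W where "W u v = D (u + v) - D u - D v"

lemma expand:
  assumes "length ys = n - 1"
  shows "D (lie_poly m (u # ys)) = lie_poly m (D u # ys) + (\<Sum>i<n - 1. lie_poly m (u # ys[i := D (ys ! i)]))"
proof -
  have l: "length (u # ys) = n" using assms n2 by simp
  have nn: "n = Suc (n - 1)" using n2 by simp
  have "D (lie_poly m (u # ys)) = (\<Sum>i<n. lie_poly m ((u # ys)[i := D ((u # ys) ! i)]))"
    using der l unfolding lie_n_derivation_def by blast
  also have "\<dots> = (\<Sum>i<Suc (n - 1). lie_poly m ((u # ys)[i := D ((u # ys) ! i)]))"
    unfolding nn[symmetric] by (rule refl)
  also have "\<dots> = lie_poly m (D u # ys) + (\<Sum>i<n - 1. lie_poly m (u # ys[i := D (ys ! i)]))"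
    unfolding sum.lessThan_Suc_shift by simp
  finally show ?thesis .
qed

lemma D0: "D 0 = 0"
proof -
  define ys where "ys = (replicate (n - 1) (0::'a))"
  have l: "length ys = n - 1" unfolding ys_def by simp
  have n1: "n - 1 = Suc (n - 2)" using n2 by simp
  have ys: "ys = 0 # replicate (n - 2) 0" unfolding ys_def n1 by simp
  have "D (lie_poly m (0 # ys)) = lie_poly m (D 0 # ys) + (\<Sum>i<n - 1. lie_poly m (0 # ys[i := D (ys ! i)]))"
    by (rule expand[OF l])
  then show ?thesis unfolding ys lp_cons2 by simp
qed

lemma Wid:
  assumes "length ys = n - 1"
  shows "W (lie_poly m (u # ys)) (lie_poly m (v # ys)) = lie_poly m (W u v # ys)"
proof -
  have "D (lie_poly m ((u + v) # ys)) = lie_poly m (D (u + v) # ys) + (\<Sum>i<n - 1. lie_poly m ((u + v) # ys[i := D (ys ! i)]))"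
    by (rule expand[OF assms])
  also have "\<dots> = lie_poly m (D (u + v) # ys) + (\<Sum>i<n - 1. lie_poly m (u # ys[i := D (ys ! i)])) + (\<Sum>i<n - 1. lie_poly m (v # ys[i := D (ys ! i)]))"
    unfolding lp_add sum.distrib by (simp add: add.assoc)
  finally have 1: "D (lie_poly m ((u + v) # ys)) = \<dots>" .
  have 2: "D (lie_poly m (u # ys)) = lie_poly m (D u # ys) + (\<Sum>i<n - 1. lie_poly m (u # ys[i := D (ys ! i)]))"
    by (rule expand[OF assms])
  have 3: "D (lie_poly m (v # ys)) = lie_poly m (D v # ys) + (\<Sum>i<n - 1. lie_poly m (v # ys[i := D (ys ! i)]))"
    by (rule expand[OF assms])
  show ?thesis unfolding W_def lp_diff using 1 2 3 by (simp add: lp_add[symmetric])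
qed

lemma W0l[simp]: "W 0 v = 0" unfolding W_def by (simp add: D0)
lemma W0r[simp]: "W u 0 = 0" unfolding W_def by (simp add: D0)

lemma ABS:
  assumes E: "length E = n - 2"
    and h1: "commutator m a y' = 0" and h2: "commutator m v x = 0"
    and h3: "commutator m v y' = commutator m b x"
  shows "lie_poly m (W a b # x # E) = 0"
proof -
  have lx: "length (x # E) = n - 1" "length (y' # E) = n - 1" "length ((x + y') # E) = n - 1"
    using E n2 by auto
  have A: "lie_poly m (W a v # x # E) = 0"
    using Wid[OF lx(1), of a v] h2 by (simp add: lp_cons2)
  have B: "lie_poly m (W a v # y' # E) = 0"
    using Wid[OF lx(2), of a v] h1 by (simp add: lp_cons2)
  have "lie_poly m (W a v # (x + y') # E) = 0"
    unfolding lp_cons2 comm_radd lp_add using A B by (simp add: lp_cons2)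
  then have "W (lie_poly m (a # (x + y') # E)) (lie_poly m (v # (x + y') # E)) = 0"
    using Wid[OF lx(3), of a v] by simp
  then have "W (lie_poly m (a # x # E)) (lie_poly m (b # x # E)) = 0"
    unfolding lp_cons2 comm_radd h1 h2 h3 by simp
  then show ?thesis using Wid[OF lx(1), of a b] by simp
qed

end

locale altall = altder m D n + altre m e for m :: "'a::ab_group_add \<Rightarrow> 'a \<Rightarrow> 'a" and D n e
begin

lemma main:
  assumes cond1: "\<And>a11 a22. a11 \<in> peirce m e 1 1 \<Longrightarrow> a22 \<in> peirce m e 2 2 \<Longrightarrow>
                  (\<forall>x\<in>peirce m e 1 2. commutator m (a11 + a22) x = 0) \<Longrightarrow>
                  a11 + a22 \<in> center m"
    and i: "i \<in> {1, 2::nat}"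
    and a: "a \<in> peirce m e i i" and b: "b \<in> peirce m e i i"
  shows "\<exists>z\<in>center m. D (a + b) = D a + D b + z"
proof -
  define E where "E = replicate (n - 2) e"
  have lE: "length E = n - 2" unfolding E_def by simp
  have lE1: "length (e # E) = n - 1" using lE n2 by simp
  have aa: "(m e a = a \<and> m a e = a) \<or> (m e a = 0 \<and> m a e = 0)"
    using i a p11[of a] p22[of a] by auto
  have bb: "(m e b = b \<and> m b e = b \<and> i = 1) \<or> (m e b = 0 \<and> m b e = 0 \<and> i = 2)"
    using i b p11[of b] p22[of b] by auto
  have ae: "commutator m a e = 0" "commutator m b e = 0"
    using aa bb unfolding commutator_def by auto
  have xcase: "lie_poly m (W a b # x # E) = 0" if x: "x \<in> peirce m e 1 2" for x
  proof -
    have ex: "m e x = x" "m x e = 0" using p12[OF x] by auto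
    have xx: "m x x = 0" using sq12[OF ex] .
    from bb show ?thesis
    proof
      assume b1: "m e b = b \<and> m b e = b \<and> i = 1"
      note bx = b11x[of b x] b1 ex
      show ?thesis
      proof (rule ABS[OF lE, of a "- e" "m b x" x b])
        show "commutator m a (- e) = 0" using aa unfolding commutator_def by (auto simp: bil)
        have "m (m b x) x = 0" using ra[of b x] xx by simp
        moreover have "m x (m b x) = 0" using flex[of x b] bx by simp
        ultimately show "commutator m (m b x) x = 0" unfolding commutator_def by simp
        show "commutator m (m b x) (- e) = commutator m b x"
          unfolding commutator_def using bx by (simp add: bil)
      qed
    next
      assume b2: "m e b = 0 \<and> m b e = 0 \<and> i = 2"
      note bx = d22x[of b x] b2 ex
      show ?thesis
      proof (rule ABS[OF lE, of a e "m x b" x b])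
        show "commutator m a e = 0" by (rule ae)
        have "m x (m x b) = 0" using la[of x b] xx by simp
        moreover have "m (m x b) x = 0" using flex[of x b] bx by simp
        ultimately show "commutator m (m x b) x = 0" unfolding commutator_def by simp
        show "commutator m (m x b) e = commutator m b x"
          unfolding commutator_def using bx by (simp add: bil)
      qed
    qed
  qed
  define T where "T = W a b"
  define t11 where "t11 = m (m e T) e"
  define t12 where "t12 = m e T - m (m e T) e"
  define t21 where "t21 = m T e - m (m e T) e"
  define t22 where "t22 = (T - m e T) - m (T - m e T) e"
  have t11m: "t11 \<in> peirce m e 1 1" unfolding t11_def peirce_def lmul_e_def rmul_e_def by auto
  have t12m: "t12 \<in> peirce m e 1 2" unfolding t12_def peirce_def lmul_e_def rmul_e_def by auto
  have t22m: "t22 \<in> peirce m e 2 2" unfolding t22_def peirce_def lmul_e_def rmul_e_def by auto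
  have Tsum: "T = t11 + t12 + t21 + t22" unfolding t11_def t12_def t21_def t22_def by (simp add: bil)
  have eE: "lie_poly m (T # e # E) = 0"
    using Wid[OF lE1, of a b] ae unfolding T_def by (simp add: lp_cons2)
  have ce: "commutator m T e = t21 + (- t12)"
    unfolding commutator_def t21_def t12_def by (simp add: algebra_simps)
  have t21r: "m e t21 = 0" "m t21 e = t21" using p21[OF t21_def] by auto
  have t12r: "m e (- t12) = - t12" "m (- t12) e = 0" using p12[OF t12m] by (auto simp: bil)
  have z: "t21 = 0" "- t12 = 0"
    using lp_e0[OF t21r t12r, of "n - 2"] eE unfolding lp_cons2 ce E_def by auto
  have T2: "T = t11 + t22" using Tsum z by simp
  have comm: "commutator m (t11 + t22) x = 0" if x: "x \<in> peirce m e 1 2" for x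
  proof -
    have ex: "m e x = x" "m x e = 0" using p12[OF x] by auto
    note r1 = b11x[OF p11[OF t11m] ex]
    note r2 = d22x[OF p22[OF t22m] ex]
    define s where "s = m t11 x - m x t22"
    have cs: "commutator m (t11 + t22) x = 0 + s"
      unfolding commutator_def s_def using r1 r2 by (simp add: bil)
    have s1: "m e s = s" "m s e = 0" unfolding s_def using r1 r2 by (simp_all add: bil)
    have "lie_poly m ((0 + s) # replicate (n - 2) e) = 0"
      using xcase[OF x] unfolding T_def[symmetric] T2 lp_cons2 cs E_def .
    then have "s = 0" using lp_e0[of 0 s] s1 by simp
    then show ?thesis using cs by simp
  qed
  have "T \<in> center m" using cond1[OF t11m t22m] comm T2 by auto
  moreover have "D (a + b) = D a + D b + T" unfolding T_def W_def by simp
  ultimately show ?thesis by blast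
qed

end

theorem lemma2p5:
  fixes m :: "'a::ab_group_add \<Rightarrow> 'a \<Rightarrow> 'a" and e :: 'a and D :: "'a \<Rightarrow> 'a"
  assumes alt: "alternative_ring m"
    and idem: "nontrivial_idempotent m e"
    and cond1: "\<And>a11 a22. a11 \<in> peirce m e 1 1 \<Longrightarrow> a22 \<in> peirce m e 2 2 \<Longrightarrow>
                  (\<forall>x\<in>peirce m e 1 2. commutator m (a11 + a22) x = 0) \<Longrightarrow>
                  a11 + a22 \<in> center m"
    and cond2: "\<And>a11 a22. a11 \<in> peirce m e 1 1 \<Longrightarrow> a22 \<in> peirce m e 2 2 \<Longrightarrow>
                  (\<forall>x\<in>peirce m e 2 1. commutator m (a11 + a22) x = 0) \<Longrightarrow>
                  a11 + a22 \<in> center m"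
    and D: "lie_type_derivation m D"
    and i: "i \<in> {1, 2::nat}"
    and a: "a \<in> peirce m e i i" and b: "b \<in> peirce m e i i"
  shows "\<exists>z\<in>center m. D (a + b) = D a + D b + z"
proof -
  obtain n where n: "2 \<le> n" "lie_n_derivation m n D"
    using D unfolding lie_type_derivation_def by blast
  have ee: "m e e = e" using idem unfolding nontrivial_idempotent_def by blast
  interpret altall m D n e
    by (unfold_locales; (rule alt n ee)?)
  show ?thesis by (rule main[OF cond1 i a b])
qed

end
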